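(* Let $d,p\ge 1$ and consider the two-layer linear model $f_1(\mathbf{x})=\mathbf{W}_1\mathbf{x}$, $f_2(\mathbf{x})=\mathbf{W}_2\mathbf{W}_1\mathbf{x}$ with $\mathbf{W}_1\in\mathbb{R}^{p\times d}$, $\mathbf{W}_2\in\mathbb{R}^{p\times p}$. Let $(\mathbf{W}_1,\mathbf{W}_2)$ be a global minimizer of $\mathcal{L}_{CL}(f_2)$ which, among all global minimizers, has the smallest value of $\|\mathbf{W}_1^\top\mathbf{W}_1\|_F^2+\|\mathbf{W}_2^\top\mathbf{W}_2\|_F^2$. Then $\mathbf{W}_1\mathbf{W}_1^\top=\mathbf{W}_2^\top\mathbf{W}_2$.
   Context: Pretraining distribution $\mathcal{D}$: a random input $\mathbf{x}\in\mathbb{R}^d$ has independent coordinates, with $x_i$ uniform on $\{-\phi_i,\phi_i\}$, $\phi_i>0$. Augmentation $\mathcal{A}(\mathbf{x})$: for each coordinate $i$ independently, with probability $\alpha_i\in[0,1]$ the sign of $x_i$ is re-randomized (replaced by an independent uniform choice of $\pm\phi_i$), otherwise $x_i$ is kept, giving $\mathbf{x}'$; then independent noise $\boldsymbol{\xi}$ with $\mathbb{E}[\boldsymbol{\xi}]=0$, $\mathbb{E}[\boldsymbol{\xi}\boldsymbol{\xi}^\top]=\sigma^2\mathbf{I}$ is added, and the augmentation is $\mathbf{x}'+\boldsymbol{\xi}$. Different draws of $\mathcal{A}$ are independent. The spectral contrastive loss of a map $f$ is $\mathcal{L}_{CL}(f)=-2\,\mathbb{E}_{\mathbf{x}\sim\mathcal{D},\,\mathbf{x}_1^+,\mathbf{x}_2^+\sim\mathcal{A}(\mathbf{x})}[f(\mathbf{x}_1^+)^\top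 f(\mathbf{x}_2^+)]+\mathbb{E}_{\mathbf{x}_1,\mathbf{x}_2\sim\mathcal{D}\text{ i.i.d.}}[(f(\mathcal{A}(\mathbf{x}_1))^\top f(\mathcal{A}(\mathbf{x}_2)))^2]$, where $\mathbf{x}_1^+,\mathbf{x}_2^+$ are two independent augmentations of the same $\mathbf{x}$. *)

theory Defs
  imports "HOL-Probability.Probability"
begin

text \<open>Sign patterns on the coordinates are functions 'd => bool (True = +, False = -).
  A point of the pretraining distribution with sign pattern s is sgnvec phi s.\<close>

definition sgnvec :: "('d::finite \<Rightarrow> real) \<Rightarrow> ('d \<Rightarrow> bool) \<Rightarrow> real^'d" where
  "sgnvec \<phi> s = (\<chi> i. if s i then \<phi> i else - \<phi> i)"

definition unif_w :: "('d::finite \<Rightarrow> bool) \<Rightarrow> real" where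
  "unif_w s = (1/2) ^ CARD('d)"

text \<open>Discrete randomness of one augmentation: r i says whether coordinate i is
  re-randomized (probability alpha i), u is the fresh uniform sign pattern.\<close>
definition aug_w :: "('d::finite \<Rightarrow> real) \<Rightarrow> ('d \<Rightarrow> bool) \<times> ('d \<Rightarrow> bool) \<Rightarrow> real" where
  "aug_w \<alpha> ru = (\<Prod>i\<in>UNIV. if fst ru i then \<alpha> i else 1 - \<alpha> i) * unif_w (snd ru)"

definition aug_pt :: "('d::finite \<Rightarrow> real) \<Rightarrow> ('d \<Rightarrow> bool) \<Rightarrow> ('d \<Rightarrow> bool) \<times> ('d \<Rightarrow> bool) \<Rightarrow> real^'d" where
  "aug_pt \<phi> s ru = sgnvec \<phi> (\<lambda>i. if fst ru i then snd ru i else s i)"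

text \<open>Expectation of g(A(x1), A(x2)) for two independent augmentations A of the
  (fixed) points with sign patterns s1, s2; the noises are independent draws from N.\<close>
definition aug_exp2 ::
  "('d::finite \<Rightarrow> real) \<Rightarrow> ('d \<Rightarrow> real) \<Rightarrow> (real^'d) measure
     \<Rightarrow> (real^'d \<Rightarrow> real^'d \<Rightarrow> real) \<Rightarrow> ('d \<Rightarrow> bool) \<Rightarrow> ('d \<Rightarrow> bool) \<Rightarrow> real" where
  "aug_exp2 \<phi> \<alpha> N g s1 s2 =
     (\<Sum>ru1\<in>UNIV. \<Sum>ru2\<in>UNIV. aug_w \<alpha> ru1 * aug_w \<alpha> ru2 *
        (\<integral>z. g (aug_pt \<phi> s1 ru1 + fst z) (aug_pt \<phi> s2 ru2 + snd z) \<partial>(N \<Otimes>\<^sub>M N)))"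

definition cl_loss ::
  "('d::finite \<Rightarrow> real) \<Rightarrow> ('d \<Rightarrow> real) \<Rightarrow> (real^'d) measure \<Rightarrow> (real^'d \<Rightarrow> real^'p::finite) \<Rightarrow> real" where
  "cl_loss \<phi> \<alpha> N f =
     - 2 * (\<Sum>s\<in>UNIV. unif_w s * aug_exp2 \<phi> \<alpha> N (\<lambda>a b. f a \<bullet> f b) s s)
     + (\<Sum>s1\<in>UNIV. \<Sum>s2\<in>UNIV. unif_w s1 * unif_w s2 *
          aug_exp2 \<phi> \<alpha> N (\<lambda>a b. (f a \<bullet> f b)\<^sup>2) s1 s2)"

definition noise_dist :: "(real^'d::finite) measure \<Rightarrow> real \<Rightarrow> bool" where
  "noise_dist N \<sigma> \<longleftrightarrow> prob_space N \<and> sets N = sets borel \<and>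
     (\<forall>i. integrable N (\<lambda>\<xi>. (\<xi> $ i)\<^sup>2)) \<and>
     (\<forall>i. integrable N (\<lambda>\<xi>. \<xi> $ i) \<and> (\<integral>\<xi>. \<xi> $ i \<partial>N) = 0) \<and>
     (\<forall>i j. (\<integral>\<xi>. \<xi> $ i * \<xi> $ j \<partial>N) = (if i = j then \<sigma>\<^sup>2 else 0))"

end

theory Submission
  imports Defs
begin


lemma mm_add_r: "((A::real^'n^'m) + B) ** (C::real^'k^'n) = A ** C + B ** C"
  by (vector matrix_matrix_mult_def sum.distrib[symmetric] field_simps)
lemma mm_diff_l: "(A::real^'n^'m) ** (B - C) = A ** B - A ** (C::real^'k^'n)"
  by (simp add: matrix_matrix_mult_def vec_eq_iff sum_subtractf algebra_simps)
lemma mm_diff_r: "((A::real^'n^'m) - B) ** (C::real^'k^'n) = A ** C - B ** C"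
  by (simp add: matrix_matrix_mult_def vec_eq_iff sum_subtractf algebra_simps)
lemma tr_add: "transpose (A + B) = transpose A + transpose (B::real^'n^'m)"
  by (simp add: transpose_def vec_eq_iff)
lemma tr_diff: "transpose (A - B) = transpose A - transpose (B::real^'n^'m)"
  by (simp add: transpose_def vec_eq_iff)
lemma mm_scale_l: "(c *\<^sub>R (A::real^'n^'m)) ** (B::real^'k^'n) = c *\<^sub>R (A ** B)"
  by (simp add: matrix_matrix_mult_def sum_distrib_left mult_ac vec_eq_iff)
lemma mm_scale_r: "(A::real^'n^'m) ** (c *\<^sub>R (B::real^'k^'n)) = c *\<^sub>R (A ** B)"
  by (simp add: matrix_matrix_mult_def sum_distrib_left mult_ac vec_eq_iff)

lemma inner_mm_l: "(A::real^'k^'m) \<bullet> ((B::real^'n^'m) ** C) = (transpose B ** A) \<bullet> C"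
proof -
  have "A \<bullet> (B ** C) = (\<Sum>i\<in>UNIV. \<Sum>j\<in>UNIV. \<Sum>k\<in>UNIV. A$i$j * B$i$k * C$k$j)"
    by (simp add: inner_vec_def matrix_matrix_mult_def sum_distrib_left mult_ac)
  also have "\<dots> = (\<Sum>k\<in>UNIV. \<Sum>j\<in>UNIV. \<Sum>i\<in>UNIV. A$i$j * B$i$k * C$k$j)"
  proof -
    have "(\<Sum>i\<in>UNIV. \<Sum>j\<in>UNIV. \<Sum>k\<in>UNIV. A$i$j * B$i$k * C$k$j) = (\<Sum>i\<in>UNIV. \<Sum>k\<in>UNIV. \<Sum>j\<in>UNIV. A$i$j * B$i$k * C$k$j)"
      by (rule sum.cong, simp, rule sum.swap)
    also have "\<dots> = (\<Sum>k\<in>UNIV. \<Sum>i\<in>UNIV. \<Sum>j\<in>UNIV. A$i$j * B$i$k * C$k$j)"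
      by (rule sum.swap)
    also have "\<dots> = (\<Sum>k\<in>UNIV. \<Sum>j\<in>UNIV. \<Sum>i\<in>UNIV. A$i$j * B$i$k * C$k$j)"
      by (rule sum.cong, simp, rule sum.swap)
    finally show ?thesis .
  qed
  also have "\<dots> = (transpose B ** A) \<bullet> C"
    by (simp add: inner_vec_def matrix_matrix_mult_def transpose_def sum_distrib_right sum_distrib_left mult_ac)
  finally show ?thesis .
qed

lemma inner_mm_r: "(A::real^'k^'m) \<bullet> ((B::real^'n^'m) ** C) = (A ** transpose C) \<bullet> B"
proof -
  have "A \<bullet> (B ** C) = (\<Sum>i\<in>UNIV. \<Sum>j\<in>UNIV. \<Sum>k\<in>UNIV. A$i$j * B$i$k * C$k$j)"
    by (simp add: inner_vec_def matrix_matrix_mult_def sum_distrib_left mult_ac)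
  also have "\<dots> = (\<Sum>i\<in>UNIV. \<Sum>k\<in>UNIV. \<Sum>j\<in>UNIV. A$i$j * B$i$k * C$k$j)"
    by (rule sum.cong, simp, rule sum.swap)
  also have "\<dots> = (A ** transpose C) \<bullet> B"
    by (simp add: inner_vec_def matrix_matrix_mult_def transpose_def sum_distrib_right sum_distrib_left mult_ac)
  finally show ?thesis .
qed

lemma inner_tr: "(A::real^'n^'m) \<bullet> B = transpose A \<bullet> transpose B"
  unfolding inner_vec_def transpose_def by (simp, rule sum.swap)

lemma poly_lin0:
  fixes a b c d :: real
  assumes h: "\<forall>t. 0 \<le> a*t + b*t^2 + c*t^3 + d*t^4"
  shows "a = 0"
proof (rule ccontr)
  assume a: "a \<noteq> 0"
  define K where "K = \<bar>a\<bar> + \<bar>b\<bar> + \<bar>c\<bar> + \<bar>d\<bar> + 1"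
  have K1: "K \<ge> 1" "\<bar>a\<bar> \<le> K" unfolding K_def by auto
  define t where "t = - a / (2*K)"
  have tabs: "\<bar>t\<bar> = \<bar>a\<bar> / (2*K)" unfolding t_def using K1 by (simp add: abs_divide)
  have "\<bar>a\<bar> / (2*K) \<le> 1" using K1 by (simp add: pos_divide_le_eq)
  then have tle: "\<bar>t\<bar> \<le> 1" using tabs by simp
  have t2: "t^2 \<le> 1"
  proof -
    have "t^2 = \<bar>t\<bar>^2" by simp
    also have "\<dots> \<le> 1^2" by (rule power_mono[OF tle abs_ge_zero])
    finally show ?thesis by simp
  qed
  have t3: "\<bar>t^3\<bar> \<le> t^2"
  proof -
    have "\<bar>t^3\<bar> = \<bar>t\<bar> * t^2" by (simp add: power3_eq_cube power2_eq_square abs_mult)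
    also have "\<dots> \<le> 1 * t^2" by (rule mult_right_mono[OF tle], simp)
    finally show ?thesis by simp
  qed
  have t4: "\<bar>t^4\<bar> \<le> t^2"
  proof -
    have "\<bar>t^4\<bar> = t^2 * t^2" by (simp add: power4_eq_xxxx power2_eq_square abs_mult)
    also have "\<dots> \<le> 1 * t^2" by (rule mult_right_mono[OF t2], simp)
    finally show ?thesis by simp
  qed
  have "b*t^2 + c*t^3 + d*t^4 \<le> \<bar>b\<bar>*t^2 + \<bar>c\<bar>*t^2 + \<bar>d\<bar>*t^2"
  proof -
    have "b*t^2 \<le> \<bar>b\<bar>*t^2" by (simp add: mult_right_mono)
    moreover have "c*t^3 \<le> \<bar>c\<bar>*t^2"
    proof -
      have "c*t^3 \<le> \<bar>c\<bar> * \<bar>t^3\<bar>" using abs_ge_self[of "c*t^3"] by (simp only: abs_mult)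
      also have "\<dots> \<le> \<bar>c\<bar> * t^2" by (rule mult_left_mono[OF t3 abs_ge_zero])
      finally show ?thesis .
    qed
    moreover have "d*t^4 \<le> \<bar>d\<bar>*t^2"
    proof -
      have "d*t^4 \<le> \<bar>d\<bar> * \<bar>t^4\<bar>" using abs_ge_self[of "d*t^4"] by (simp only: abs_mult)
      also have "\<dots> \<le> \<bar>d\<bar> * t^2" by (rule mult_left_mono[OF t4 abs_ge_zero])
      finally show ?thesis .
    qed
    ultimately show ?thesis by linarith
  qed
  also have "\<dots> \<le> K * t^2" unfolding K_def by (simp add: algebra_simps)
  also have "K * t^2 = a^2 / (4*K)" using K1 unfolding t_def by (simp add: power2_eq_square field_simps)
  finally have 1: "b*t^2 + c*t^3 + d*t^4 \<le> a^2 / (4*K)" .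
  have 2: "a * t = - (a^2/(4*K)) - a^2/(4*K)" using K1 unfolding t_def by (simp add: power2_eq_square field_simps)
  have "a^2/(4*K) > 0" using a K1 by simp
  with 1 2 h[rule_format, of t] show False by linarith
qed


definition nf :: "real^'d^'p \<Rightarrow> real^'p^'p \<Rightarrow> real" where
 "nf V1 V2 = (norm (transpose V1 ** V1))^2 + (norm (transpose V2 ** V2))^2"

lemma norm_poly: "(norm (X0 + t *\<^sub>R X1 + t^2 *\<^sub>R X2 :: real^'n^'m))^2 = X0\<bullet>X0 + 2*t*(X0\<bullet>X1) + t^2*(X1\<bullet>X1 + 2*(X0\<bullet>X2)) + 2*t^3*(X1\<bullet>X2) + t^4*(X2\<bullet>X2)"
  unfolding power2_norm_eq_inner by (simp add: inner_add_left inner_add_right inner_commute algebra_simps power2_eq_square power3_eq_cube power4_eq_xxxx)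

lemma sym_tr: "transpose ((A::real^'n^'m) ** transpose A) = A ** transpose A"
  by (simp add: matrix_transpose_mul)

lemma shear:
  fixes W1 :: "real^'d^'p" and W2 E :: "real^'p^'p"
  assumes EE: "E ** E = 0"
    and K: "\<forall>V1 V2. V2 ** V1 = W2 ** W1 \<longrightarrow> nf W1 W2 \<le> nf V1 V2"
  shows "((W1 ** transpose W1) ** (W1 ** transpose W1) - (transpose W2 ** W2) ** (transpose W2 ** W2)) \<bullet> E = 0"
proof -
  define P where "P = W1 ** transpose W1"
  define Q where "Q = transpose W2 ** W2"
  define X0 where "X0 = transpose W1 ** W1"
  define X1 where "X1 = transpose W1 ** (E + transpose E) ** W1"
  define X2 where "X2 = transpose W1 ** transpose E ** E ** W1"
  define Y1 where "Y1 = - (transpose E ** Q + Q ** E)"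
  define Y2 where "Y2 = transpose E ** Q ** E"
  have main: "0 \<le> (2*(X0\<bullet>X1) + 2*(Q\<bullet>Y1))*t + (X1\<bullet>X1 + 2*(X0\<bullet>X2) + Y1\<bullet>Y1 + 2*(Q\<bullet>Y2))*t^2 + (2*(X1\<bullet>X2) + 2*(Y1\<bullet>Y2))*t^3 + (X2\<bullet>X2 + Y2\<bullet>Y2)*t^4" for t
  proof -
    define A where "A = mat 1 + t *\<^sub>R E"
    define B where "B = mat 1 - t *\<^sub>R E"
    have BA: "B ** A = mat 1" unfolding A_def B_def
      by (simp add: matrix_add_ldistrib mm_diff_r mm_scale_l mm_scale_r EE)
    have prod: "(W2 ** B) ** (A ** W1) = W2 ** W1"
      by (metis BA matrix_mul_assoc matrix_mul_lid)
    have e1: "transpose (A ** W1) ** (A ** W1) = X0 + t *\<^sub>R X1 + t^2 *\<^sub>R X2"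
      unfolding A_def X0_def X1_def X2_def
      by (simp add: matrix_transpose_mul tr_add transpose_scalar mm_add_r matrix_add_ldistrib
          mm_scale_l mm_scale_r matrix_mul_assoc algebra_simps power2_eq_square)
    have e2: "transpose (W2 ** B) ** (W2 ** B) = Q + t *\<^sub>R Y1 + t^2 *\<^sub>R Y2"
      unfolding B_def Q_def Y1_def Y2_def
      by (simp add: matrix_transpose_mul tr_diff transpose_scalar mm_diff_r mm_diff_l mm_add_r matrix_add_ldistrib
          mm_scale_l mm_scale_r matrix_mul_assoc algebra_simps power2_eq_square)
    from K prod have "nf W1 W2 \<le> nf (A ** W1) (W2 ** B)" by blast
    then show ?thesis unfolding nf_def e1 e2 X0_def[symmetric] Q_def[symmetric] norm_poly
      by (simp add: power2_norm_eq_inner algebra_simps)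
  qed
  have lin: "2*(X0\<bullet>X1) + 2*(Q\<bullet>Y1) = 0"
    by (rule poly_lin0, use main in auto)
  have PT: "transpose P = P" unfolding P_def by (rule sym_tr)
  have QT: "transpose Q = Q" unfolding Q_def by (simp add: matrix_transpose_mul)
  have "X0\<bullet>X1 = (W1 ** X0 ** transpose W1) \<bullet> (E + transpose E)"
    unfolding X1_def by (subst inner_mm_r, subst inner_mm_l, simp add: matrix_mul_assoc)
  also have "W1 ** X0 ** transpose W1 = P ** P"
    unfolding X0_def P_def by (simp add: matrix_mul_assoc)
  also have "(P ** P) \<bullet> (E + transpose E) = 2 * ((P ** P) \<bullet> E)"
  proof -
    have "(P ** P) \<bullet> transpose E = (P ** P) \<bullet> E"
      by (subst inner_tr, simp add: matrix_transpose_mul PT)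
    then show ?thesis by (simp add: inner_add_right)
  qed
  finally have 1: "X0\<bullet>X1 = 2 * ((P ** P) \<bullet> E)" .
  have a: "Q \<bullet> (transpose E ** Q) = (Q ** Q) \<bullet> E"
  proof -
    have "Q \<bullet> (transpose E ** Q) = (E ** Q) \<bullet> Q" by (subst inner_mm_l, simp)
    also have "\<dots> = Q \<bullet> (E ** Q)" by (rule inner_commute)
    also have "\<dots> = (Q ** transpose Q) \<bullet> E" by (rule inner_mm_r)
    finally show ?thesis using QT by simp
  qed
  have b: "Q \<bullet> (Q ** E) = (Q ** Q) \<bullet> E"
    by (simp add: inner_mm_l QT)
  have 2: "Q\<bullet>Y1 = - 2 * ((Q ** Q) \<bullet> E)"
    unfolding Y1_def by (simp add: inner_add_right inner_minus_right inner_diff_right a b)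
  from lin 1 2 show ?thesis unfolding P_def[symmetric] Q_def[symmetric]
    by (simp add: inner_diff_left)
qed


definition outer :: "real^'n \<Rightarrow> real^'n \<Rightarrow> real^'n^'n" where
  "outer u v = (\<chi> k l. u$k * v$l)"

lemma outer_sq: assumes "v \<bullet> u = 0" shows "outer u v ** outer u v = 0"
proof -
  have "\<And>k l. (\<Sum>m\<in>UNIV. u$k * v$m * (u$m * v$l)) = u$k * v$l * (\<Sum>m\<in>UNIV. v$m * u$m)"
    by (simp add: sum_distrib_left mult_ac)
  moreover have "(\<Sum>m\<in>UNIV. v$m * u$m) = 0" using assms by (simp add: inner_vec_def)
  ultimately show ?thesis by (simp add: outer_def matrix_matrix_mult_def vec_eq_iff)
qed

lemma outer_add_l: "outer (a + b) v = outer a v + outer b v"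
  by (simp add: outer_def vec_eq_iff algebra_simps)
lemma outer_diff_r: "outer u (a - b) = outer u a - outer u b"
  by (simp add: outer_def vec_eq_iff algebra_simps)
lemma inner_outer: "(R::real^'n^'n) \<bullet> outer u v = u \<bullet> (R *v v)"
  by (simp add: inner_vec_def outer_def matrix_vector_mult_def sum_distrib_left mult_ac)

lemma inner_outer_axis: "(R::real^'n^'n) \<bullet> outer (axis i 1) (axis j 1) = R$i$j"
  by (simp add: inner_outer inner_axis' matrix_vector_mult_basis column_def)

lemma amgm_eq:
  fixes a b :: real
  assumes a: "a \<ge> 0" and b: "b \<ge> 0" and h: "\<forall>s>0. a + b \<le> s*a + b/s"
  shows "a = b"
proof (cases "a = 0")
  case True
  with h[rule_format, of 2] b show ?thesis by simp
next
  case False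
  with a have ap: "a > 0" by simp
  define s where "s = (a+b)/(2*a)"
  have sp: "s > 0" using ap b unfolding s_def by simp
  have abp: "a + b > 0" using ap b by simp
  have e1: "s*a = (a+b)/2" using ap unfolding s_def by simp
  have e2: "b/s = 2*a*b/(a+b)" using ap abp unfolding s_def by (simp add: field_simps)
  have "a + b \<le> s*a + b/s" using h sp by blast
  then have "(a+b)/2 \<le> 2*a*b/(a+b)" unfolding e1 e2 by (smt (verit) field_sum_of_halves)
  then have "(a+b)/2 * (a+b) \<le> 2*a*b" using abp by (simp add: le_divide_eq)
  then have "(a+b)*(a+b) \<le> 4*a*b" by simp
  then have "(a-b)^2 \<le> 0" by (simp add: power2_eq_square algebra_simps)
  then show ?thesis by simp
qed


theorem theorem3p3:
  fixes \<phi> \<alpha> :: "'d::finite \<Rightarrow> real" and \<sigma> :: real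
    and N :: "(real^'d) measure"
    and W1 :: "real^'d^'p::finite" and W2 :: "real^'p^'p"
  assumes phi_pos: "\<forall>i. \<phi> i > 0"
    and alpha_range: "\<forall>i. 0 \<le> \<alpha> i \<and> \<alpha> i \<le> 1"
    and noise: "noise_dist N \<sigma>"
    and global_min: "\<forall>V1 :: real^'d^'p. \<forall>V2 :: real^'p^'p.
        cl_loss \<phi> \<alpha> N (\<lambda>x. (W2 ** W1) *v x) \<le> cl_loss \<phi> \<alpha> N (\<lambda>x. (V2 ** V1) *v x)"
    and min_norm: "\<forall>V1 :: real^'d^'p. \<forall>V2 :: real^'p^'p.
        (\<forall>U1 :: real^'d^'p. \<forall>U2 :: real^'p^'p.
            cl_loss \<phi> \<alpha> N (\<lambda>x. (V2 ** V1) *v x) \<le> cl_loss \<phi> \<alpha> N (\<lambda>x. (U2 ** U1) *v x))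
        \<longrightarrow> (norm (transpose W1 ** W1))\<^sup>2 + (norm (transpose W2 ** W2))\<^sup>2
            \<le> (norm (transpose V1 ** V1))\<^sup>2 + (norm (transpose V2 ** V2))\<^sup>2"
  shows "W1 ** transpose W1 = transpose W2 ** W2"
  proof -
  have K: "\<forall>V1 V2. V2 ** V1 = W2 ** W1 \<longrightarrow> nf W1 W2 \<le> nf V1 V2"
  proof (intro allI impI)
    fix V1 :: "real^'d^'p" and V2 :: "real^'p^'p"
    assume h: "V2 ** V1 = W2 ** W1"
    have "\<forall>U1 :: real^'d^'p. \<forall>U2 :: real^'p^'p. cl_loss \<phi> \<alpha> N (\<lambda>x. (V2 ** V1) *v x) \<le> cl_loss \<phi> \<alpha> N (\<lambda>x. (U2 ** U1) *v x)"
      using global_min h by simp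
    then show "nf W1 W2 \<le> nf V1 V2" using min_norm unfolding nf_def by blast
  qed
  define P where "P = W1 ** transpose W1"
  define Q where "Q = transpose W2 ** W2"
  define R where "R = P ** P - Q ** Q"
  have PT: "transpose P = P" unfolding P_def by (rule sym_tr)
  have QT: "transpose Q = Q" unfolding Q_def by (simp add: matrix_transpose_mul)
  have RE: "R \<bullet> E = 0" if "E ** E = 0" for E
    using shear[OF that K] unfolding R_def P_def Q_def .
  have off: "R$i$j = 0" if "i \<noteq> j" for i j
  proof -
    have "axis j (1::real) \<bullet> axis i 1 = 0" using that by (simp add: inner_axis_axis)
    then have "R \<bullet> outer (axis i 1) (axis j 1) = 0" by (intro RE outer_sq)
    then show ?thesis by (simp add: inner_outer_axis)
  qed
  have diag: "R$i$i = R$j$j" for i j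
  proof (cases "i = j")
    case False
    have "(axis i (1::real) - axis j 1) \<bullet> (axis i 1 + axis j 1) = 0"
      using False by (simp add: inner_axis_axis inner_add_right inner_diff_left)
    then have "R \<bullet> outer (axis i 1 + axis j 1) (axis i 1 - axis j 1) = 0" by (intro RE outer_sq)
    then have "R$i$i - R$i$j + R$j$i - R$j$j = 0"
      by (simp add: outer_add_l outer_diff_r inner_add_right inner_diff_right inner_outer_axis)
    then show ?thesis using off[OF False] off[of j i] False by simp
  qed simp
  define X0 where "X0 = transpose W1 ** W1"
  have scal: "(norm X0)^2 = (norm Q)^2"
  proof (rule amgm_eq)
    show "\<forall>s>0. (norm X0)\<^sup>2 + (norm Q)\<^sup>2 \<le> s * (norm X0)\<^sup>2 + (norm Q)\<^sup>2 / s"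
    proof (intro allI impI)
      fix s :: real assume sp: "s > 0"
      define c where "c = sqrt (sqrt s)"
      have cp: "c > 0" unfolding c_def using sp by simp
      have c4: "c^4 = s" unfolding c_def using sp
        by (metis less_eq_real_def numeral_Bit0 power_add power2_eq_square real_sqrt_pow2 real_sqrt_ge_zero)
      have "((1/c) *\<^sub>R W2) ** (c *\<^sub>R W1) = W2 ** W1" using cp by (simp add: mm_scale_l mm_scale_r)
      then have "nf W1 W2 \<le> nf (c *\<^sub>R W1) ((1/c) *\<^sub>R W2)" using K by blast
      moreover have "nf W1 W2 = (norm X0)^2 + (norm Q)^2" unfolding nf_def X0_def Q_def ..
      moreover have "nf (c *\<^sub>R W1) ((1/c) *\<^sub>R W2) = c^4 * (norm X0)^2 + (norm Q)^2 / c^4"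
      proof -
        have a1: "transpose (c *\<^sub>R W1) ** (c *\<^sub>R W1) = (c*c) *\<^sub>R X0"
          unfolding X0_def by (simp add: transpose_scalar mm_scale_l mm_scale_r)
        have a2: "transpose ((1/c) *\<^sub>R W2) ** ((1/c) *\<^sub>R W2) = ((1/c)*(1/c)) *\<^sub>R Q"
          unfolding Q_def by (simp add: transpose_scalar mm_scale_l mm_scale_r)
        have "(norm ((c*c) *\<^sub>R X0))^2 = c^4 * (norm X0)^2"
          using cp by (simp add: power_mult_distrib power2_eq_square power4_eq_xxxx)
        moreover have "(norm (((1/c)*(1/c)) *\<^sub>R Q))^2 = (norm Q)^2 / c^4"
          using cp by (simp add: power_mult_distrib power2_eq_square power4_eq_xxxx divide_simps)
        ultimately show ?thesis unfolding nf_def a1 a2 by simp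
      qed
      ultimately show "(norm X0)\<^sup>2 + (norm Q)\<^sup>2 \<le> s * (norm X0)\<^sup>2 + (norm Q)\<^sup>2 / s"
        using c4 by simp
    qed
  qed simp_all
  have X0P: "X0 \<bullet> X0 = P \<bullet> P"
  proof -
    have "X0 \<bullet> X0 = (W1 ** X0) \<bullet> W1" unfolding X0_def by (subst inner_mm_l, simp)
    also have "\<dots> = W1 \<bullet> (P ** W1)" unfolding X0_def P_def by (simp add: matrix_mul_assoc inner_commute)
    also have "\<dots> = P \<bullet> P" unfolding P_def by (subst inner_mm_r, simp)
    finally show ?thesis .
  qed
  have PPI: "(P ** P) \<bullet> mat 1 = P \<bullet> P"
    by (subst inner_commute, subst inner_mm_l, simp add: PT)
  have QQI: "(Q ** Q) \<bullet> mat 1 = Q \<bullet> Q"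
    by (subst inner_commute, subst inner_mm_l, simp add: QT)
  have trR: "R \<bullet> mat 1 = 0"
    using scal X0P PPI QQI unfolding R_def by (simp add: inner_diff_left power2_norm_eq_inner)
  have trsum: "R \<bullet> mat 1 = (\<Sum>i\<in>UNIV. R$i$i)"
    by (simp add: inner_vec_def mat_def if_distrib if_distribR cong: if_cong)
  have R0: "R = 0"
  proof -
    fix i0 :: 'p
    have "(\<Sum>i\<in>UNIV. R$i$i) = (\<Sum>i\<in>(UNIV::'p set). R$i0$i0)" by (rule sum.cong[OF refl], rule diag)
    then have "real CARD('p) * R$i0$i0 = 0" using trR trsum by simp
    then have d0: "R$i0$i0 = 0" by simp
    have "R$i$j = 0" for i j
      using off[of i j] diag[of i i0] d0 by (cases "i = j") auto
    then show ?thesis by (simp add: vec_eq_iff)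
  qed
  then have PQ: "P ** P = Q ** Q" unfolding R_def by simp
  define D where "D = P - Q"
  have DT: "transpose D = D" unfolding D_def using PT QT by (simp add: tr_diff)
  have e1: "(transpose W1 ** D) \<bullet> (transpose W1 ** D) = (P ** D) \<bullet> D"
    unfolding P_def by (subst inner_mm_l, simp add: matrix_mul_assoc)
  have e2: "(W2 ** D) \<bullet> (W2 ** D) = (Q ** D) \<bullet> D"
    unfolding Q_def by (subst inner_mm_l, simp add: matrix_mul_assoc)
  have f1: "(Q ** P) \<bullet> P = (P ** Q) \<bullet> P"
  proof -
    have "(Q ** P) \<bullet> P = P \<bullet> (Q ** P)" by (rule inner_commute)
    also have "\<dots> = (P ** transpose P) \<bullet> Q" by (rule inner_mm_r)
    also have "\<dots> = (transpose P ** P) \<bullet> Q" using PT by simp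
    also have "\<dots> = P \<bullet> (P ** Q)" by (rule inner_mm_l[symmetric])
    also have "\<dots> = (P ** Q) \<bullet> P" by (rule inner_commute)
    finally show ?thesis .
  qed
  have f2: "(Q ** P) \<bullet> Q = (P ** Q) \<bullet> Q"
  proof -
    have "(Q ** P) \<bullet> Q = Q \<bullet> (Q ** P)" by (rule inner_commute)
    also have "\<dots> = (transpose Q ** Q) \<bullet> P" by (rule inner_mm_l)
    also have "\<dots> = (Q ** transpose Q) \<bullet> P" using QT by simp
    also have "\<dots> = Q \<bullet> (P ** Q)" by (rule inner_mm_r[symmetric])
    also have "\<dots> = (P ** Q) \<bullet> Q" by (rule inner_commute)
    finally show ?thesis .
  qed
  have "(P ** D) \<bullet> D + (Q ** D) \<bullet> D = ((P + Q) ** D) \<bullet> D"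
    by (simp add: mm_add_r inner_add_left)
  also have "(P + Q) ** D = Q ** P - P ** Q"
    unfolding D_def using PQ by (simp add: matrix_add_ldistrib mm_diff_l mm_add_r)
  also have "(Q ** P - P ** Q) \<bullet> D = 0"
    unfolding D_def using f1 f2 by (simp add: inner_diff_left inner_diff_right)
  finally have sum0: "(P ** D) \<bullet> D + (Q ** D) \<bullet> D = 0" .
  have n1: "(P ** D) \<bullet> D \<ge> 0" unfolding e1[symmetric] by simp
  have n2: "(Q ** D) \<bullet> D \<ge> 0" unfolding e2[symmetric] by simp
  have "(transpose W1 ** D) \<bullet> (transpose W1 ** D) = 0" using e1 n1 n2 sum0 by linarith
  then have z1: "transpose W1 ** D = 0" by simp
  have "(W2 ** D) \<bullet> (W2 ** D) = 0" using e2 n1 n2 sum0 by linarith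
  then have z2: "W2 ** D = 0" by simp
  have PD: "P ** D = 0" unfolding P_def using z1 by (simp flip: matrix_mul_assoc)
  have QD: "Q ** D = 0" unfolding Q_def using z2 by (simp flip: matrix_mul_assoc)
  have DD: "D ** D = 0" using PD QD by (simp add: D_def mm_diff_r)
  have "D \<bullet> D = (D ** D) \<bullet> mat 1"
    by (subst inner_commute, subst inner_mm_l, simp add: DT)
  then have "D = 0" using DD by simp
  then show ?thesis unfolding D_def P_def Q_def by simp
qed

end
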